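(* Fix $e\in\mathbb Z_{>0}$ and let $\mathsf Y_e(t)=\sum_{k\geqslant 0}y^{k+1}_{k+2+e}t^k\in\mathbb Z[[t]]$. Then \[ \mathsf Y_e(t)=\frac{\mathsf y_e(t)}{(1-t)^{2e+1}},\qquad \mathsf y_e(t)=\sum_{h=0}^{2e-1}\gamma^{(e)}_h t^h\in\mathbb Z[t], \] where for $0\leqslant h\leqslant 2e-1$ \[ \gamma^{(e)}_h=\sum_{j=0}^{h}(-1)^{h+j}\binom{2e+1}{h-j}y^{j+1}_{j+e+2}. \] In particular $\mathsf Y_e(t)$ is a rational function and $\mathsf y_e$ has degree at most $2e-1$.
   Context: Let $\mathbb N=\mathbb Z_{\geqslant 0}$ with the componentwise partial order on $\mathbb N^n$. For integers $n,d\geqslant 0$, an $(n-1)$-dimensional partition of size $d$ is a subset $\lambda\subset\mathbb N^n$ with $|\lambda|=d$ such that $\mathbf a\in\lambda$ and $\mathbf y\leqslant\mathbf a$ imply $\mathbf y\in\lambda$; $\mathrm P^n_d$ is the set of these. The embedding dimension $h_\lambda(1)$ is the number of elements of $\lambda$ whose coordinates sum to $1$. Define $y^k_d=|\{\lambda\in\mathrm P^k_d: h_\lambda(1)=k\}|$. *)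

theory Defs
  imports "HOL-Computational_Algebra.Computational_Algebra"
begin

definition partitions :: "nat \<Rightarrow> nat \<Rightarrow> nat list set set" where
  "partitions n d = {L. L \<subseteq> {a. length a = n} \<and> card L = d \<and> finite L \<and>
      (\<forall>a\<in>L. \<forall>y. length y = n \<and> list_all2 (\<le>) y a \<longrightarrow> y \<in> L)}"

definition emb_dim :: "nat list set \<Rightarrow> nat" where
  "emb_dim L = card {a\<in>L. sum_list a = 1}"

definition ycount :: "nat \<Rightarrow> nat \<Rightarrow> nat" where
  "ycount k d = card {L\<in>partitions k d. emb_dim L = k}"

definition Yser :: "nat \<Rightarrow> int fps" where
  "Yser e = Abs_fps (\<lambda>k. int (ycount (k+1) (k+2+e)))"

definition gamma :: "nat \<Rightarrow> nat \<Rightarrow> int" where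
  "gamma e h = (\<Sum>j=0..h. (-1)^(h+j) * int ((2*e+1) choose (h-j)) * int (ycount (j+1) (j+e+2)))"

definition ypoly :: "nat \<Rightarrow> int poly" where
  "ypoly e = (\<Sum>h=0..2*e-1. monom (gamma e h) h)"

end

theory Submission
  imports Defs
begin


definition vdeg :: "(nat \<Rightarrow> nat) \<Rightarrow> nat" where
  "vdeg f = sum f {i. f i \<noteq> 0}"

definition good :: "nat \<Rightarrow> (nat \<Rightarrow> nat) set \<Rightarrow> bool" where
  "good e M \<longleftrightarrow> finite M \<and> card M = e \<and> (\<forall>f\<in>M. finite {i. f i \<noteq> 0} \<and> 2 \<le> vdeg f)
     \<and> (\<forall>f\<in>M. \<forall>g. g \<le> f \<and> 2 \<le> vdeg g \<longrightarrow> g \<in> M)"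

definition supp :: "(nat \<Rightarrow> nat) set \<Rightarrow> nat set" where
  "supp M = {i. \<exists>f\<in>M. f i \<noteq> 0}"

definition cnt :: "nat \<Rightarrow> nat set \<Rightarrow> nat" where
  "cnt e U = card {M. good e M \<and> supp M = U}"

lemma goodD:
  assumes "good e M"
  shows "finite M" "card M = e" "\<And>f. f \<in> M \<Longrightarrow> finite {i. f i \<noteq> 0}"
    "\<And>f. f \<in> M \<Longrightarrow> 2 \<le> vdeg f"
    "\<And>f g. f \<in> M \<Longrightarrow> g \<le> f \<Longrightarrow> 2 \<le> vdeg g \<Longrightarrow> g \<in> M"
  using assms unfolding good_def by blast+

lemma vdeg_eq: "finite A \<Longrightarrow> {i. f i \<noteq> 0} \<subseteq> A \<Longrightarrow> vdeg f = sum f A"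
  unfolding vdeg_def by (rule sum.mono_neutral_left) auto

lemma vdeg_comp_bij:
  assumes "bij p" "finite {i. f i \<noteq> 0}"
  shows "vdeg (f \<circ> p) = vdeg f"
proof -
  have e: "{i. (f \<circ> p) i \<noteq> 0} = p -` {i. f i \<noteq> 0}" by auto
  have "sum (f \<circ> p) (p -` {i. f i \<noteq> 0}) = sum f (p ` (p -` {i. f i \<noteq> 0}))"
    by (rule sum.reindex[symmetric]) (meson assms(1) bij_is_inj inj_on_subset subset_UNIV)
  also have "p ` (p -` {i. f i \<noteq> 0}) = {i. f i \<noteq> 0}"
    by (rule surj_image_vimage_eq[OF bij_is_surj[OF assms(1)]])
  finally show ?thesis unfolding vdeg_def e .
qed

lemma fin_le: "g \<le> (f::nat\<Rightarrow>nat) \<Longrightarrow> finite {i. f i \<noteq> 0} \<Longrightarrow> finite {i. g i \<noteq> 0}"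
proof (rule finite_subset[of _ "{i. f i \<noteq> 0}"])
  assume "g \<le> f"
  show "{i. g i \<noteq> 0} \<subseteq> {i. f i \<noteq> 0}"
  proof
    fix i assume "i \<in> {i. g i \<noteq> 0}"
    moreover have "g i \<le> f i" using \<open>g \<le> f\<close> by (simp add: le_fun_def)
    ultimately show "i \<in> {i. f i \<noteq> 0}" by simp
  qed
qed

lemma transport:
  assumes p: "bij p" and M: "good e M"
  shows "good e ((\<lambda>f. f \<circ> p) ` M) \<and> supp ((\<lambda>f. f \<circ> p) ` M) = p -` supp M"
proof -
  have inj: "inj_on (\<lambda>f. f \<circ> p) M"
  proof (rule inj_onI)
    fix f g assume "f \<circ> p = g \<circ> p"
    hence "(f \<circ> p) \<circ> inv p = (g \<circ> p) \<circ> inv p" by simp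
    thus "f = g" using p by (metis bij_is_surj comp_id surj_iff o_assoc)
  qed
  have fin: "finite {i. (f \<circ> p) i \<noteq> 0}" if "f \<in> M" for f
  proof -
    have eq: "{i. (f \<circ> p) i \<noteq> 0} = p -` {i. f i \<noteq> 0}" by auto
    have ff: "finite {i. f i \<noteq> 0}" using M that by (simp add: good_def)
    show ?thesis unfolding eq by (rule finite_vimageI[OF ff bij_is_inj[OF p]])
  qed
  have down: "g \<in> (\<lambda>f. f \<circ> p) ` M" if f: "f \<in> M" and gle: "g \<le> f \<circ> p" and g2: "2 \<le> vdeg g" for f g
  proof -
    let ?g = "g \<circ> inv p"
    have fg: "finite {i. g i \<noteq> 0}" using fin_le[OF gle fin[OF f]] .
    have "?g \<le> f"
    proof (rule le_funI)
      fix i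
      have "g (inv p i) \<le> f (p (inv p i))" using gle by (simp add: le_fun_def)
      thus "?g i \<le> f i" using p by (simp add: surj_f_inv_f bij_is_surj)
    qed
    moreover have "vdeg ?g = vdeg g" using vdeg_comp_bij[OF bij_imp_bij_inv[OF p] fg] .
    ultimately have "?g \<in> M" using goodD(5)[OF M f] g2 by simp
    moreover have "g = ?g \<circ> p" using p by (auto simp: fun_eq_iff inv_f_f bij_is_inj)
    ultimately show ?thesis by blast
  qed
  have "good e ((\<lambda>f. f \<circ> p) ` M)"
    unfolding good_def
  proof (intro conjI ballI allI impI)
    show "finite ((\<lambda>f. f \<circ> p) ` M)" using goodD(1)[OF M] by simp
    show "card ((\<lambda>f. f \<circ> p) ` M) = e" using goodD(2)[OF M] inj by (simp add: card_image)
  next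
    fix h assume "h \<in> (\<lambda>f. f \<circ> p) ` M"
    then obtain f where f: "f \<in> M" "h = f \<circ> p" by auto
    show "finite {i. h i \<noteq> 0}" using fin f by simp
    show "2 \<le> vdeg h" using f goodD(3,4)[OF M f(1)] vdeg_comp_bij[OF p] by simp
  next
    fix h g assume "h \<in> (\<lambda>f. f \<circ> p) ` M" "g \<le> h \<and> 2 \<le> vdeg g"
    then show "g \<in> (\<lambda>f. f \<circ> p) ` M" using down by blast
  qed
  moreover have "supp ((\<lambda>f. f \<circ> p) ` M) = p -` supp M"
    unfolding supp_def by auto
  ultimately show ?thesis by blast
qed

lemma cnt_bij:
  assumes p: "bij p"
  shows "cnt e U = cnt e (p -` U)"
proof -
  let ?A = "{M. good e M \<and> supp M = U}"
  let ?B = "{M. good e M \<and> supp M = p -` U}"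
  let ?P = "\<lambda>M. (\<lambda>f. f \<circ> p) ` M"
  have injc: "inj (\<lambda>f::nat\<Rightarrow>nat. f \<circ> p)"
  proof (rule injI)
    fix f g :: "nat \<Rightarrow> nat" assume "f \<circ> p = g \<circ> p"
    hence "(f \<circ> p) \<circ> inv p = (g \<circ> p) \<circ> inv p" by simp
    thus "f = g" using p by (metis bij_is_surj comp_id surj_iff o_assoc)
  qed
  have inj: "inj_on ?P ?A"
    by (rule inj_onI) (simp add: inj_image_eq_iff[OF injc])
  have im: "?P ` ?A = ?B"
  proof
    show "?P ` ?A \<subseteq> ?B"
    proof (rule image_subsetI)
      fix M assume "M \<in> ?A"
      hence "good e M" "supp M = U" by simp_all
      thus "?P M \<in> ?B" using transport[OF p \<open>good e M\<close>] by simp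
    qed
  next
    show "?B \<subseteq> ?P ` ?A"
    proof
      fix M' assume M': "M' \<in> ?B"
      let ?M = "(\<lambda>f. f \<circ> inv p) ` M'"
      have ip: "bij (inv p)" using p by (rule bij_imp_bij_inv)
      have gM': "good e M'" using M' by simp
      have t: "good e ?M \<and> supp ?M = inv p -` supp M'"
        using transport[OF ip gM'] .
      have "inv p -` (p -` U) = U" by (rule set_eqI) (simp add: surj_f_inv_f[OF bij_is_surj[OF p]])
      hence MA: "?M \<in> ?A" using t M' by simp
      have PM: "?P ?M = M'"
      proof -
        have "\<And>f::nat\<Rightarrow>nat. (f \<circ> inv p) \<circ> p = f"
          by (simp add: comp_assoc inv_o_cancel[OF bij_is_inj[OF p]])
        thus ?thesis by (simp add: image_image)
      qed
      show "M' \<in> ?P ` ?A" by (rule rev_image_eqI[of _ _ _ ?P, OF MA PM[symmetric]])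
    qed
  qed
  have "card ?B = card ?A" unfolding im[symmetric] by (rule card_image[OF inj])
  thus ?thesis unfolding cnt_def by (rule sym)
qed

lemma perm_exists:
  fixes U :: "nat set"
  assumes "finite U"
  shows "\<exists>p. bij p \<and> p -` U = {..<card U}"
proof -
  define u where "u = card U"
  define S where "S = {..<u} \<union> U"
  have fS: "finite S" using assms unfolding S_def by simp
  obtain g where g: "bij_betw g {..<u} U"
    using finite_same_card_bij[of "{..<u}" U] assms unfolding u_def by auto
  have "card (S - {..<u}) = card (S - U)"
    using fS assms unfolding S_def u_def
    by (simp add: card_Diff_subset)
  then obtain k where k: "bij_betw k (S - {..<u}) (S - U)"
    using finite_same_card_bij[of "S - {..<u}" "S - U"] fS by auto
  define p where "p = (\<lambda>i. if i < u then g i else if i \<in> S then k i else i)"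
  have b1: "bij_betw p {..<u} U" using g by (rule bij_betw_cong[THEN iffD1, rotated]) (simp add: p_def)
  have b2: "bij_betw p (S - {..<u}) (S - U)" using k by (rule bij_betw_cong[THEN iffD1, rotated]) (simp add: p_def)
  have b3: "bij_betw p (- S) (- S)" by (rule bij_betw_cong[THEN iffD1, rotated, of id]) (auto simp: p_def S_def)
  have "bij_betw p ({..<u} \<union> (S - {..<u})) (U \<union> (S - U))"
    by (rule bij_betw_combine[OF b1 b2]) auto
  hence "bij_betw p ({..<u} \<union> (S - {..<u}) \<union> - S) (U \<union> (S - U) \<union> - S)"
    by (rule bij_betw_combine[OF _ b3]) (auto simp: S_def)
  moreover have "{..<u} \<union> (S - {..<u}) \<union> - S = UNIV" "U \<union> (S - U) \<union> - S = UNIV"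
    unfolding S_def by auto
  ultimately have bp: "bij p" by simp
  have "p x \<in> U \<longleftrightarrow> x < u" for x
  proof
    assume "p x \<in> U"
    show "x < u"
    proof (rule ccontr)
      assume "\<not> x < u"
      show False
      proof (cases "x \<in> S")
        case True
        hence "p x \<in> S - U" using k \<open>\<not> x < u\<close> by (auto simp: p_def bij_betw_def)
        thus False using \<open>p x \<in> U\<close> by simp
      next
        case False
        thus False using \<open>p x \<in> U\<close> \<open>\<not> x < u\<close> by (simp add: p_def S_def)
      qed
    qed
  next
    assume "x < u"
    thus "p x \<in> U" using g by (auto simp: p_def bij_betw_def)
  qed
  hence pU: "p -` U = {..<card U}" unfolding u_def by auto
  show ?thesis by (rule exI[of _ p]) (simp only: bp pU)
qed

lemma cnt_card:
  assumes "finite U"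
  shows "cnt e U = cnt e {..<card U}"
proof -
  obtain p where b: "bij p" and pU: "p -` U = {..<card U}" using perm_exists[OF assms] by blast
  have "cnt e U = cnt e (p -` U)" by (rule cnt_bij[OF b])
  also have "\<dots> = cnt e {..<card U}" by (simp only: pU)
  finally show ?thesis .
qed



lemma vdeg_delta: "vdeg (\<lambda>j. if j = i then k else 0) = k"
  by (subst vdeg_eq[of "{i}"]) auto

lemma good_entry_bound:
  assumes M: "good e M" and f: "f \<in> M"
  shows "f i \<le> e + 1"
proof (rule ccontr)
  assume "\<not> f i \<le> e + 1"
  let ?d = "\<lambda>k. (\<lambda>j::nat. if j = i then k else (0::nat))"
  have sub: "?d ` {2..f i} \<subseteq> M"
  proof
    fix g assume "g \<in> ?d ` {2..f i}"
    then obtain k where k: "k \<in> {2..f i}" "g = ?d k" by auto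
    have "g \<le> f" using k by (auto simp: le_fun_def)
    moreover have "2 \<le> vdeg g" using k vdeg_delta by simp
    ultimately show "g \<in> M" using goodD(5)[OF M f] by blast
  qed
  have inj: "inj_on ?d {2..f i}" by (rule inj_onI) (metis (mono_tags))
  have "card (?d ` {2..f i}) \<le> card M" by (rule card_mono[OF goodD(1)[OF M] sub])
  hence "f i - 1 \<le> e" using card_image[OF inj] goodD(2)[OF M] by simp
  thus False using \<open>\<not> f i \<le> e + 1\<close> by simp
qed

lemma finite_good:
  assumes "finite U"
  shows "finite {M. good e M \<and> supp M \<subseteq> U}"
proof -
  let ?W = "{f::nat\<Rightarrow>nat. \<forall>x. (x \<in> U \<longrightarrow> f x \<in> {..e+1}) \<and> (x \<notin> U \<longrightarrow> f x = 0)}"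
  have fW: "finite ?W" using finite_set_of_finite_funs[OF assms, of "{..e+1}" 0] by simp
  have "{M. good e M \<and> supp M \<subseteq> U} \<subseteq> Pow ?W"
  proof
    fix M assume "M \<in> {M. good e M \<and> supp M \<subseteq> U}"
    hence M: "good e M" "supp M \<subseteq> U" by auto
    show "M \<in> Pow ?W"
    proof (rule PowI, rule subsetI)
      fix f assume f: "f \<in> M"
      have "f x = 0" if "x \<notin> U" for x using M(2) that f unfolding supp_def by blast
      moreover have "f x \<le> e + 1" for x by (rule good_entry_bound[OF M(1) f])
      ultimately show "f \<in> ?W" by auto
    qed
  qed
  thus ?thesis using fW by (meson finite_Pow_iff finite_subset)
qed

lemma finite_supp:
  assumes M: "good e M" shows "finite (supp M)"
proof -
  have "supp M = (\<Union>f\<in>M. {i. f i \<noteq> 0})" unfolding supp_def by auto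
  thus ?thesis using goodD(1,3)[OF M] by simp
qed

lemma card_le_sum:
  assumes "finite S" "\<forall>i\<in>S. 1 \<le> (g::nat\<Rightarrow>nat) i"
  shows "card S \<le> sum g S"
proof -
  have "card S = sum (\<lambda>_. 1::nat) S" by simp
  also have "\<dots> \<le> sum g S" by (rule sum_mono) (use assms in auto)
  finally show ?thesis .
qed

lemma card_supp_le:
  assumes M: "good e M" shows "card (supp M) \<le> 2 * e"
proof -
  let ?M2 = "{g\<in>M. vdeg g = 2}"
  have cover: "supp M \<subseteq> (\<Union>g\<in>?M2. {i. g i \<noteq> 0})"
  proof
    fix i assume "i \<in> supp M"
    then obtain f where f: "f \<in> M" "f i \<noteq> 0" unfolding supp_def by auto
    have ff: "finite {i. f i \<noteq> 0}" and f2: "2 \<le> vdeg f" using goodD(3,4)[OF M f(1)] by auto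
    show "i \<in> (\<Union>g\<in>?M2. {i. g i \<noteq> 0})"
    proof (cases "f i \<ge> 2")
      case True
      let ?g = "\<lambda>j. if j = i then 2 else (0::nat)"
      have "?g \<le> f" using True by (auto simp: le_fun_def)
      moreover have "vdeg ?g = 2" by (rule vdeg_delta)
      ultimately have "?g \<in> ?M2" using goodD(5)[OF M f(1)] by auto
      thus ?thesis by force
    next
      case False
      hence fi: "f i = 1" using f(2) by simp
      have "\<exists>j. j \<noteq> i \<and> f j \<noteq> 0"
      proof (rule ccontr)
        assume "\<not> ?thesis"
        hence "{i. f i \<noteq> 0} \<subseteq> {i}" by auto
        hence "vdeg f = sum f {i}" by (intro vdeg_eq) auto
        thus False using fi f2 by simp
      qed
      then obtain j where j: "j \<noteq> i" "f j \<noteq> 0" by blast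
      let ?g = "\<lambda>k. if k = i \<or> k = j then 1 else (0::nat)"
      have "?g \<le> f" using fi j by (auto simp: le_fun_def)
      moreover have "vdeg ?g = 2" using j by (subst vdeg_eq[of "{i,j}"]) auto
      ultimately have "?g \<in> ?M2" using goodD(5)[OF M f(1)] by auto
      thus ?thesis by force
    qed
  qed
  have fM2: "finite ?M2" using goodD(1)[OF M] by simp
  have c2: "card {i. g i \<noteq> 0} \<le> 2" if "g \<in> ?M2" for g
  proof -
    have "finite {i. g i \<noteq> 0}" using goodD(3)[OF M] that by simp
    hence "card {i. g i \<noteq> 0} \<le> sum g {i. g i \<noteq> 0}" by (rule card_le_sum) auto
    also have "\<dots> = 2" using that unfolding vdeg_def by simp
    finally show ?thesis .
  qed
  have "card (supp M) \<le> card (\<Union>g\<in>?M2. {i. g i \<noteq> 0})"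
    by (rule card_mono[OF _ cover]) (use fM2 goodD(3)[OF M] in auto)
  also have "\<dots> \<le> (\<Sum>g\<in>?M2. card {i. g i \<noteq> 0})" by (rule card_UN_le[OF fM2])
  also have "\<dots> \<le> (\<Sum>g\<in>?M2. 2)" by (rule sum_mono) (rule c2)
  also have "\<dots> = 2 * card ?M2" by simp
  also have "\<dots> \<le> 2 * e" using card_mono[OF goodD(1)[OF M], of ?M2] goodD(2)[OF M] by auto
  finally show ?thesis .
qed

lemma supp_nonempty:
  assumes M: "good e M" and e: "e > 0" shows "supp M \<noteq> {}"
proof -
  have "M \<noteq> {}" using goodD(2)[OF M] e by auto
  then obtain f where f: "f \<in> M" by auto
  have "\<exists>i. f i \<noteq> 0"
  proof (rule ccontr)
    assume "\<not> ?thesis"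
    hence "vdeg f = 0" unfolding vdeg_def by simp
    thus False using goodD(4)[OF M f] by simp
  qed
  thus ?thesis using f unfolding supp_def by auto
qed



lemma sum_decomp:
  assumes A: "finite A"
  shows "card {M. good e M \<and> supp M \<subseteq> A} = (\<Sum>U\<in>Pow A. cnt e U)"
proof -
  have eq: "{M. good e M \<and> supp M \<subseteq> A} = (\<Union>U\<in>Pow A. {M. good e M \<and> supp M = U})" by auto
  have fin: "finite {M. good e M \<and> supp M = U}" if "U \<in> Pow A" for U
    by (rule finite_subset[OF _ finite_good[OF A, of e]]) (use that in auto)
  show ?thesis unfolding eq cnt_def
    by (rule card_UN_disjoint) (use A fin in auto)
qed

lemma sum_pow:
  assumes A: "finite A"
  shows "(\<Sum>U\<in>Pow A. (g (card U)::nat)) = (\<Sum>u\<le>card A. (card A choose u) * g u)"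
proof -
  have "(\<Sum>U\<in>Pow A. g (card U)) = (\<Sum>u\<le>card A. \<Sum>U\<in>{U\<in>Pow A. card U = u}. g (card U))"
    by (rule sum.group[symmetric]) (use A card_mono in auto)
  also have "\<dots> = (\<Sum>u\<le>card A. (card A choose u) * g u)"
  proof (rule sum.cong[OF refl])
    fix u
    have se: "{U\<in>Pow A. card U = u} = {B. B \<subseteq> A \<and> card B = u}" by auto
    have "(\<Sum>U\<in>{U\<in>Pow A. card U = u}. g (card U)) = (\<Sum>U\<in>{U\<in>Pow A. card U = u}. g u)"
      by (rule sum.cong) auto
    also have "\<dots> = card {U\<in>Pow A. card U = u} * g u" by simp
    also have "card {U\<in>Pow A. card U = u} = card A choose u" unfolding se by (rule n_subsets[OF A])
    finally show "(\<Sum>U\<in>{U\<in>Pow A. card U = u}. g (card U)) = (card A choose u) * g u" .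
  qed
  finally show ?thesis .
qed

lemma good_count:
  assumes e: "e > 0"
  shows "card {M. good e M \<and> supp M \<subseteq> {..<n}} = (\<Sum>u\<in>{1..2*e}. (n choose u) * cnt e {..<u})"
proof -
  have "card {M. good e M \<and> supp M \<subseteq> {..<n}} = (\<Sum>U\<in>Pow {..<n}. cnt e U)"
    by (rule sum_decomp) simp
  also have "\<dots> = (\<Sum>U\<in>Pow {..<n}. cnt e {..<card U})"
    by (rule sum.cong[OF refl]) (rule cnt_card, auto intro: finite_subset)
  also have "\<dots> = (\<Sum>u\<le>n. (n choose u) * cnt e {..<u})"
    using sum_pow[of "{..<n}" "\<lambda>u. cnt e {..<u}"] by simp
  also have "\<dots> = (\<Sum>u\<le>n+2*e. (n choose u) * cnt e {..<u})"
    by (rule sum.mono_neutral_left) auto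
  finally have Z0: "card {M. good e M \<and> supp M \<subseteq> {..<n}} = (\<Sum>u\<le>n+2*e. (n choose u) * cnt e {..<u})" .
  have Z: "\<forall>u\<in>{..n + 2 * e} - {1..2 * e}. (n choose u) * cnt e {..<u} = 0"
    proof (intro ballI)
      fix u assume u: "u \<in> {..n + 2 * e} - {1..2 * e}"
      have "cnt e {..<u} = 0"
      proof (cases "u = 0")
        case True
        have "{M. good e M \<and> supp M = {..<u}} = {}" using supp_nonempty[OF _ e] True by auto
        thus ?thesis unfolding cnt_def by (simp only: card.empty)
      next
        case False
        hence "u > 2 * e" using u by auto
        have "{M. good e M \<and> supp M = {..<u}} = {}"
        proof (rule ccontr)
          assume "\<not> ?thesis"
          then obtain M where "good e M" "supp M = {..<u}" by auto
          thus False using card_supp_le[of e M] \<open>u > 2 * e\<close> by simp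
        qed
        thus ?thesis unfolding cnt_def by (simp only: card.empty)
      qed
      thus "(n choose u) * cnt e {..<u} = 0" by simp
    qed
  have "(\<Sum>u\<le>n+2*e. (n choose u) * cnt e {..<u}) = (\<Sum>u\<in>{1..2*e}. (n choose u) * cnt e {..<u})"
    by (rule sum.mono_neutral_right) (use Z in auto)
  with Z0 show ?thesis by simp
qed



definition vec :: "nat list \<Rightarrow> nat \<Rightarrow> nat" where
  "vec a = (\<lambda>i. if i < length a then a ! i else 0)"

lemma vec_inj: "length a = length b \<Longrightarrow> vec a = vec b \<Longrightarrow> a = b"
proof (rule nth_equalityI)
  fix i assume "length a = length b" "vec a = vec b" "i < length a"
  hence "vec a i = vec b i" by simp
  thus "a ! i = b ! i" using \<open>i < length a\<close> \<open>length a = length b\<close> by (simp add: vec_def)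
qed simp

lemma vec_supp: "{i. vec a i \<noteq> 0} \<subseteq> {..<length a}"
  by (auto simp: vec_def split: if_splits)

lemma vdeg_vec: "vdeg (vec a) = sum_list a"
proof -
  have "vdeg (vec a) = sum (vec a) {..<length a}" by (rule vdeg_eq[OF _ vec_supp]) simp
  also have "\<dots> = (\<Sum>i = 0..<length a. a ! i)" by (rule sum.cong) (auto simp: vec_def)
  also have "\<dots> = sum_list a" by (rule sum_list_sum_nth[symmetric])
  finally show ?thesis .
qed

lemma le_vec: "length y = length a \<Longrightarrow> list_all2 (\<le>) y a \<longleftrightarrow> vec y \<le> vec a"
  by (auto simp: list_all2_conv_all_nth le_fun_def vec_def)

lemma vec_map: "{i. f i \<noteq> 0} \<subseteq> {..<n} \<Longrightarrow> vec (map f [0..<n]) = f"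
  by (auto simp: vec_def fun_eq_iff)

lemma list_all2_sum: "list_all2 (\<le>) y a \<Longrightarrow> sum_list y \<le> sum_list (a::nat list)"
  by (induct rule: list_all2_induct) auto

definition E1 :: "nat \<Rightarrow> nat list set" where
  "E1 n = {a. length a = n \<and> sum_list a = 1}"

lemma zero_lists: "{a. length a = n \<and> sum_list a = (0::nat)} = {replicate n 0}"
proof (rule set_eqI, rule iffI)
  fix a assume "a \<in> {a. length a = n \<and> sum_list a = (0::nat)}"
  hence "length a = n" "\<forall>y\<in>set a. y = 0" by auto
  thus "a \<in> {replicate n 0}" using replicate_length_same[of a 0] by simp
qed auto

lemma E1_Suc: "E1 (Suc n) = insert (1 # replicate n 0) ((#) 0 ` E1 n)"
proof (rule set_eqI, rule iffI)
  fix a assume "a \<in> E1 (Suc n)"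
  then obtain x b where a: "a = x # b" "length b = n" "x + sum_list b = 1"
    unfolding E1_def by (auto simp: length_Suc_conv)
  show "a \<in> insert (1 # replicate n 0) ((#) 0 ` E1 n)"
  proof (cases "x = 0")
    case True thus ?thesis using a by (auto simp: E1_def)
  next
    case False
    hence xb: "x = 1" "sum_list b = 0" using a by linarith+
    hence "b \<in> {a. length a = n \<and> sum_list a = (0::nat)}" using a by blast
    hence "b = replicate n 0" unfolding zero_lists by blast
    thus ?thesis using a \<open>x = 1\<close> by simp
  qed
next
  fix a assume "a \<in> insert (1 # replicate n 0) ((#) 0 ` E1 n)"
  thus "a \<in> E1 (Suc n)" by (auto simp: E1_def)
qed

lemma card_E1: "finite (E1 n) \<and> card (E1 n) = n"
proof (induct n)
  case 0
  have "E1 0 = {}" by (auto simp: E1_def)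
  thus ?case by simp
next
  case (Suc n)
  have "1 # replicate n 0 \<notin> (#) 0 ` E1 n" by auto
  moreover have "card ((#) (0::nat) ` E1 n) = n" using Suc by (simp add: card_image)
  ultimately show ?case using Suc unfolding E1_Suc by simp
qed

definition Low :: "nat \<Rightarrow> nat list set" where
  "Low n = {a. length a = n \<and> sum_list a \<le> 1}"

lemma Low_eq: "Low n = insert (replicate n 0) (E1 n)"
proof -
  have "Low n = {a. length a = n \<and> sum_list a = 0} \<union> E1 n"
    unfolding Low_def E1_def by (auto simp del: sum_list_eq_0_iff)
  thus ?thesis using zero_lists[of n] by simp
qed

lemma card_Low: "finite (Low n) \<and> card (Low n) = n + 1"
proof -
  have "replicate n 0 \<notin> E1 n" by (simp add: E1_def sum_list_replicate)
  thus ?thesis using card_E1[of n] unfolding Low_eq by simp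
qed



definition FF :: "nat list set \<Rightarrow> (nat \<Rightarrow> nat) set" where
  "FF L = vec ` {a\<in>L. 2 \<le> sum_list a}"

definition GG :: "nat \<Rightarrow> (nat \<Rightarrow> nat) set \<Rightarrow> nat list set" where
  "GG n M = {a. length a = n \<and> (sum_list a \<le> 1 \<or> vec a \<in> M)}"

lemma partD:
  assumes "L \<in> partitions n d"
  shows "L \<subseteq> {a. length a = n}" "card L = d" "finite L"
    "\<And>a y. a \<in> L \<Longrightarrow> length y = n \<Longrightarrow> list_all2 (\<le>) y a \<Longrightarrow> y \<in> L"
  using assms unfolding partitions_def by blast+

lemma A_props:
  assumes L: "L \<in> partitions n (n+1+e)" and emb: "emb_dim L = n"
  shows "Low n \<subseteq> L" "card {a\<in>L. 2 \<le> sum_list a} = e"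
proof -
  note P = partD[OF L]
  let ?S = "{a\<in>L. sum_list a = 1}"
  have "?S \<subseteq> E1 n" using P(1) unfolding E1_def by auto
  moreover have "card ?S = card (E1 n)" using emb card_E1[of n] unfolding emb_dim_def by simp
  ultimately have "?S = E1 n" using card_subset_eq[of "E1 n" ?S] card_E1[of n] by blast
  hence E: "E1 n \<subseteq> L" by blast
  have "L \<noteq> {}" using P(2) by auto
  then obtain b where b: "b \<in> L" by auto
  have lb: "length b = n" using b P(1) by auto
  have "list_all2 (\<le>) (replicate n 0) b" using lb by (simp add: list_all2_conv_all_nth)
  hence "replicate n 0 \<in> L" using P(4)[OF b] by simp
  thus LL: "Low n \<subseteq> L" using E unfolding Low_eq by simp
  let ?H = "{a\<in>L. 2 \<le> sum_list a}"
  have U: "L = Low n \<union> ?H" using LL P(1) unfolding Low_def by auto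
  have D: "Low n \<inter> ?H = {}" unfolding Low_def by auto
  have fH: "finite ?H" using P(3) by simp
  have "card L = card (Low n) + card ?H"
    by (subst U, rule card_Un_disjoint) (use card_Low fH D in auto)
  thus "card ?H = e" using P(2) card_Low[of n] by simp
qed

lemma FF_good:
  assumes L: "L \<in> partitions n (n+1+e)" and emb: "emb_dim L = n"
  shows "good e (FF L) \<and> supp (FF L) \<subseteq> {..<n}"
proof -
  note P = partD[OF L]
  let ?H = "{a\<in>L. 2 \<le> sum_list a}"
  have inj: "inj_on vec ?H" using P(1) by (auto intro!: inj_onI vec_inj)
  have fin: "finite ?H" using P(3) by simp
  have g: "good e (FF L)" unfolding good_def FF_def
  proof (intro conjI ballI allI impI)
    show "finite (vec ` ?H)" using fin by simp
    show "card (vec ` ?H) = e" using card_image[OF inj] A_props(2)[OF L emb] by simp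
  next
    fix f assume "f \<in> vec ` ?H"
    then obtain a where a: "a \<in> ?H" "f = vec a" by auto
    show "finite {i. f i \<noteq> 0}" using a vec_supp[of a] finite_subset by blast
    show "2 \<le> vdeg f" using a vdeg_vec by simp
  next
    fix f g assume f: "f \<in> vec ` ?H" and gf: "g \<le> f \<and> 2 \<le> vdeg g"
    then obtain a where a: "a \<in> ?H" "f = vec a" by auto
    have la: "length a = n" using a P(1) by auto
    have sg: "{i. g i \<noteq> 0} \<subseteq> {..<n}"
    proof
      fix i assume "i \<in> {i. g i \<noteq> 0}"
      moreover have "g i \<le> vec a i" using gf a by (simp add: le_fun_def)
      ultimately show "i \<in> {..<n}" using la by (auto simp: vec_def split: if_splits)
    qed
    let ?y = "map g [0..<n]"
    have vy: "vec ?y = g" by (rule vec_map[OF sg])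
    have "list_all2 (\<le>) ?y a" using le_vec[of ?y a] la vy gf a by simp
    hence "?y \<in> L" using P(4)[of a ?y] a by simp
    moreover have "2 \<le> sum_list ?y" using vdeg_vec[of ?y] vy gf by simp
    ultimately show "g \<in> vec ` ?H" using vy by (metis (mono_tags, lifting) image_eqI mem_Collect_eq)
  qed
  have "supp (FF L) \<subseteq> {..<n}"
  proof
    fix i assume "i \<in> supp (FF L)"
    then obtain a where "a \<in> L" "vec a i \<noteq> 0" unfolding supp_def FF_def by auto
    thus "i \<in> {..<n}" using P(1) by (auto simp: vec_def split: if_splits)
  qed
  thus ?thesis using g by simp
qed

lemma GG_FF:
  assumes L: "L \<in> partitions n (n+1+e)" and emb: "emb_dim L = n"
  shows "GG n (FF L) = L"
proof (rule set_eqI, rule iffI)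
  note P = partD[OF L]
  fix a assume "a \<in> GG n (FF L)"
  hence a: "length a = n" "sum_list a \<le> 1 \<or> vec a \<in> FF L" unfolding GG_def by auto
  show "a \<in> L"
  proof (cases "sum_list a \<le> 1")
    case True thus ?thesis using a A_props(1)[OF L emb] unfolding Low_def by auto
  next
    case False
    then obtain b where b: "b \<in> L" "vec a = vec b" using a unfolding FF_def by auto
    have "length b = n" using b P(1) by auto
    hence "a = b" using vec_inj[of a b] a b by simp
    thus ?thesis using b by simp
  qed
next
  note P = partD[OF L]
  fix a assume "a \<in> L"
  thus "a \<in> GG n (FF L)" using P(1) unfolding GG_def FF_def by auto
qed

lemma GG_props:
  assumes M: "good e M" and S: "supp M \<subseteq> {..<n}"
  shows "GG n M \<in> partitions n (n+1+e) \<and> emb_dim (GG n M) = n \<and> FF (GG n M) = M"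
proof -
  let ?H = "{a. length a = n \<and> vec a \<in> M}"
  have inj: "inj_on vec ?H" by (auto intro!: inj_onI vec_inj)
  have im: "vec ` ?H = M"
  proof
    show "vec ` ?H \<subseteq> M" by auto
  next
    show "M \<subseteq> vec ` ?H"
    proof
      fix f assume f: "f \<in> M"
      have "{i. f i \<noteq> 0} \<subseteq> {..<n}" using S f unfolding supp_def by auto
      hence "vec (map f [0..<n]) = f" by (rule vec_map)
      thus "f \<in> vec ` ?H" using f by (metis (mono_tags, lifting) image_eqI length_map length_upt mem_Collect_eq minus_nat.diff_0)
    qed
  qed
  have fH: "finite ?H" using finite_imageD[of vec ?H] inj im goodD(1)[OF M] by simp
  have cH: "card ?H = e" using card_image[OF inj] im goodD(2)[OF M] by simp
  have H2: "2 \<le> sum_list a" if "a \<in> ?H" for a using that goodD(4)[OF M, of "vec a"] vdeg_vec[of a] by simp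
  have U: "GG n M = Low n \<union> ?H" unfolding GG_def Low_def by auto
  have D: "Low n \<inter> ?H = {}" using H2 unfolding Low_def by fastforce
  have card: "card (GG n M) = n + 1 + e"
    unfolding U by (subst card_Un_disjoint) (use card_Low fH D cH in auto)
  have fin: "finite (GG n M)" unfolding U using card_Low fH by simp
  have down: "y \<in> GG n M" if a: "a \<in> GG n M" and ly: "length y = n" and le: "list_all2 (\<le>) y a" for a y
  proof (cases "sum_list y \<le> 1")
    case True thus ?thesis using ly unfolding GG_def by simp
  next
    case False
    have "sum_list y \<le> sum_list a" by (rule list_all2_sum[OF le])
    hence "\<not> sum_list a \<le> 1" using False by simp
    hence va: "vec a \<in> M" using a unfolding GG_def by simp
    have la: "length a = n" using a unfolding GG_def by simp
    have "vec y \<le> vec a" using le_vec[of y a] la ly le by simp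
    moreover have "2 \<le> vdeg (vec y)" using False vdeg_vec[of y] by simp
    ultimately have "vec y \<in> M" using goodD(5)[OF M va] by simp
    thus ?thesis using ly unfolding GG_def by simp
  qed
  have part: "GG n M \<in> partitions n (n+1+e)"
    unfolding partitions_def using card fin down by (auto simp: GG_def)
  have "{a\<in>GG n M. sum_list a = 1} = E1 n" unfolding GG_def E1_def by auto
  hence emb: "emb_dim (GG n M) = n" unfolding emb_dim_def using card_E1[of n] by simp
  have "{a\<in>GG n M. 2 \<le> sum_list a} = ?H" unfolding GG_def using H2 by auto
  hence "FF (GG n M) = M" unfolding FF_def using im by simp
  thus ?thesis using part emb by simp
qed

lemma ycount_good:
  "ycount n (n+1+e) = card {M. good e M \<and> supp M \<subseteq> {..<n}}"
proof -
  let ?A = "{L\<in>partitions n (n+1+e). emb_dim L = n}"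
  let ?B = "{M. good e M \<and> supp M \<subseteq> {..<n}}"
  have "bij_betw FF ?A ?B"
  proof (rule bij_betw_byWitness[where f' = "GG n"])
    show "\<forall>a\<in>?A. GG n (FF a) = a" using GG_FF by blast
    show "\<forall>a\<in>?B. FF (GG n a) = a" using GG_props by blast
    show "FF ` ?A \<subseteq> ?B" using FF_good by blast
    show "GG n ` ?B \<subseteq> ?A" using GG_props by blast
  qed
  thus ?thesis unfolding ycount_def by (rule bij_betw_same_card)
qed



lemma omx: "((1 - fps_X)^m :: 'a::comm_ring_1 fps) $ k = (-1)^k * of_nat (m choose k)"
proof (induct m arbitrary: k)
  case 0 thus ?case by (cases k) (simp_all add: fps_one_nth)
next
  case (Suc m)
  note IH = Suc
  have "((1 - fps_X)^Suc m :: 'a fps) $ k = ((1 - fps_X)^m) $ k - (fps_X * (1 - fps_X)^m) $ k"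
    by (simp add: algebra_simps)
  also have "\<dots> = (-1)^k * of_nat (Suc m choose k)"
  proof (cases k)
    case 0 thus ?thesis using IH by simp
  next
    case (Suc k')
    have "((1 - fps_X)^m :: 'a fps) $ k - (fps_X * (1 - fps_X)^m) $ k
        = (-1)^k * of_nat (m choose k) - (-1)^k' * of_nat (m choose k')"
      using IH \<open>k = Suc k'\<close> by simp
    also have "\<dots> = (-1)^k * (of_nat (m choose k) + of_nat (m choose k'))"
      using \<open>k = Suc k'\<close> by (simp add: algebra_simps)
    also have "\<dots> = (-1)^k * of_nat (Suc m choose k)"
      using \<open>k = Suc k'\<close> by (simp add: add.commute)
    finally show ?thesis .
  qed
  finally show ?case .
qed

lemma Q_step:
  "Abs_fps (\<lambda>j. of_nat ((j + Suc u) choose Suc u)) * (1 - fps_X)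
     = (Abs_fps (\<lambda>j. of_nat ((j + u) choose u)) :: 'a::comm_ring_1 fps)"
proof (rule fps_ext)
  fix j
  let ?f = "Abs_fps (\<lambda>j. of_nat ((j + Suc u) choose Suc u)) :: 'a fps"
  have "(?f * (1 - fps_X)) $ j = ?f $ j - (fps_X * ?f) $ j" by (simp add: algebra_simps)
  also have "\<dots> = of_nat ((j + u) choose u)"
  proof (cases j)
    case 0 thus ?thesis by (simp add: binomial_eq_0)
  next
    case (Suc j')
    have "Suc j' + Suc u choose Suc u = (j' + Suc u choose u) + (j' + Suc u choose Suc u)"
      by simp
    thus ?thesis using Suc by simp
  qed
  finally show "(?f * (1 - fps_X)) $ j = Abs_fps (\<lambda>j. of_nat ((j + u) choose u)) $ j" by simp
qed

lemma Q_base: "Abs_fps (\<lambda>j. 1) * (1 - fps_X) = (1 :: 'a::comm_ring_1 fps)"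
proof (rule fps_ext)
  fix j
  have "(Abs_fps (\<lambda>j. 1) * (1 - fps_X) :: 'a fps) $ j = Abs_fps (\<lambda>j. 1) $ j - (fps_X * Abs_fps (\<lambda>j. 1) :: 'a fps) $ j"
    by (simp add: algebra_simps)
  thus "(Abs_fps (\<lambda>j. 1) * (1 - fps_X) :: 'a fps) $ j = (1::'a fps) $ j" by (cases j) auto
qed

lemma Q_inv: "Abs_fps (\<lambda>j. of_nat ((j + u) choose u)) * (1 - fps_X)^(Suc u) = (1 :: 'a::comm_ring_1 fps)"
proof (induct u)
  case 0 thus ?case using Q_base by simp
next
  case (Suc u)
  have "Abs_fps (\<lambda>j. of_nat ((j + Suc u) choose Suc u)) * (1 - (fps_X :: 'a fps))^(Suc (Suc u))
      = (Abs_fps (\<lambda>j. of_nat ((j + Suc u) choose Suc u)) * (1 - fps_X)) * (1 - fps_X)^(Suc u)"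
    by (simp only: power_Suc mult.assoc)
  also have "\<dots> = 1" by (simp only: Q_step Suc.hyps)
  finally show ?case .
qed

lemma P_shift:
  assumes "u \<ge> 1"
  shows "Abs_fps (\<lambda>j. of_nat ((j+1) choose u)) = fps_X^(u-1) * (Abs_fps (\<lambda>j. of_nat ((j + u) choose u)) :: 'a::comm_ring_1 fps)"
proof (rule fps_ext)
  fix j
  show "Abs_fps (\<lambda>j. of_nat ((j+1) choose u)) $ j = (fps_X^(u-1) * (Abs_fps (\<lambda>j. of_nat ((j + u) choose u)) :: 'a fps)) $ j"
    using assms by (auto simp: fps_X_power_mult_nth binomial_eq_0)
qed

lemma P_vanish:
  assumes "1 \<le> u" "u \<le> 2*e" "2*e \<le> h"
  shows "(Abs_fps (\<lambda>j. of_nat ((j+1) choose u)) * (1 - fps_X)^(2*e+1) :: 'a::comm_ring_1 fps) $ h = 0"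
proof -
  have pw: "(1 - fps_X)^(2*e+1) = (1 - fps_X)^(Suc u) * ((1 - fps_X)^(2*e-u) :: 'a fps)"
  proof -
    have eqn: "2*e+1 = Suc u + (2*e-u)" using assms by simp
    show ?thesis by (subst eqn) (rule power_add)
  qed
  have "Abs_fps (\<lambda>j. of_nat ((j+1) choose u)) * (1 - fps_X)^(2*e+1)
     = fps_X^(u-1) * ((Abs_fps (\<lambda>j. of_nat ((j + u) choose u)) * (1 - fps_X)^(Suc u)) * (1 - fps_X)^(2*e-u) :: 'a fps)"
    unfolding P_shift[OF assms(1)] pw by (simp only: mult.assoc)
  also have "\<dots> = fps_X^(u-1) * (1 - fps_X)^(2*e-u)" by (simp only: Q_inv mult_1_left)
  finally have eq: "Abs_fps (\<lambda>j. of_nat ((j+1) choose u)) * (1 - fps_X)^(2*e+1) = fps_X^(u-1) * ((1 - fps_X)^(2*e-u) :: 'a fps)" .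
  show ?thesis unfolding eq using assms by (simp add: fps_X_power_mult_nth omx binomial_eq_0)
qed



lemma y_formula:
  assumes "e > 0"
  shows "ycount (j+1) (j+2+e) = (\<Sum>u\<in>{1..2*e}. ((j+1) choose u) * cnt e {..<u})"
proof -
  have "j+2+e = (j+1)+1+e" by simp
  hence "ycount (j+1) (j+2+e) = card {M. good e M \<and> supp M \<subseteq> {..<j+1}}"
    using ycount_good[of "j+1" e] by simp
  also have "\<dots> = (\<Sum>u\<in>{1..2*e}. ((j+1) choose u) * cnt e {..<u})" by (rule good_count[OF assms])
  finally show ?thesis .
qed

definition PP :: "nat \<Rightarrow> int fps" where
  "PP u = Abs_fps (\<lambda>j. of_nat ((j+1) choose u))"

lemma Yser_decomp:
  assumes "e > 0"
  shows "Yser e = (\<Sum>u\<in>{1..2*e}. fps_const (int (cnt e {..<u})) * PP u)"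
proof (rule fps_ext)
  fix j
  have "Yser e $ j = int (ycount (j+1) (j+2+e))" by (simp add: Yser_def)
  also have "\<dots> = (\<Sum>u\<in>{1..2*e}. int (cnt e {..<u}) * int ((j+1) choose u))"
    unfolding y_formula[OF assms] by (simp add: of_nat_sum mult.commute)
  also have "\<dots> = (\<Sum>u\<in>{1..2*e}. fps_const (int (cnt e {..<u})) * PP u) $ j"
    by (simp add: fps_sum_nth PP_def)
  finally show "Yser e $ j = (\<Sum>u\<in>{1..2*e}. fps_const (int (cnt e {..<u})) * PP u) $ j" .
qed

lemma vanish:
  assumes e: "e > 0" and h: "2*e \<le> h"
  shows "(Yser e * (1 - fps_X)^(2*e+1)) $ h = 0"
proof -
  have "Yser e * (1 - fps_X)^(2*e+1) = (\<Sum>u\<in>{1..2*e}. fps_const (int (cnt e {..<u})) * (PP u * (1 - fps_X)^(2*e+1)))"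
    unfolding Yser_decomp[OF e] by (simp add: sum_distrib_right mult.assoc)
  hence "(Yser e * (1 - fps_X)^(2*e+1)) $ h = (\<Sum>u\<in>{1..2*e}. int (cnt e {..<u}) * (PP u * (1 - fps_X)^(2*e+1)) $ h)"
    by (simp add: fps_sum_nth)
  also have "\<dots> = 0"
  proof (rule sum.neutral, rule ballI)
    fix u assume u: "u \<in> {1..2*e}"
    have "(PP u * (1 - fps_X)^(2*e+1)) $ h = 0" unfolding PP_def by (rule P_vanish) (use u h in auto)
    thus "int (cnt e {..<u}) * (PP u * (1 - fps_X)^(2*e+1)) $ h = 0" by simp
  qed
  finally show ?thesis .
qed

lemma conv:
  "(Yser e * (1 - fps_X)^(2*e+1)) $ h
     = (\<Sum>j=0..h. int (ycount (j+1) (j+2+e)) * ((-1)^(h-j) * of_nat ((2*e+1) choose (h-j))))"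
  unfolding fps_mult_nth omx by (simp add: Yser_def)

lemma coeff_ypoly: "coeff (ypoly e) h = (if h \<le> 2*e-1 then gamma e h else 0)"
  unfolding ypoly_def by (simp add: coeff_sum coeff_monom)

lemma sign: "j \<le> h \<Longrightarrow> ((-1::int)^(h+j)) = (-1)^(h-j)"
proof -
  assume "j \<le> h"
  hence eq: "h + j = (h - j) + 2*j" by simp
  have "((-1::int)^(h+j)) = (-1)^((h - j) + 2*j)" by (simp only: eq)
  also have "\<dots> = (-1)^(h-j)" by (simp add: power_add power_mult)
  finally show ?thesis .
qed

lemma part1:
  assumes e: "e > 0"
  shows "Yser e * (1 - fps_X) ^ (2*e+1) = fps_of_poly (ypoly e)"
proof (rule fps_ext)
  fix h
  show "(Yser e * (1 - fps_X) ^ (2*e+1)) $ h = fps_of_poly (ypoly e) $ h"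
  proof (cases "h \<le> 2*e-1")
    case True
    have "(Yser e * (1 - fps_X) ^ (2*e+1)) $ h = gamma e h"
      unfolding conv gamma_def
    proof (rule sum.cong[OF refl])
      fix j assume "j \<in> {0..h}"
      hence s: "(-1::int)^(h+j) = (-1)^(h-j)" by (simp add: sign)
      have "j+2+e = j+e+2" by simp
      thus "int (ycount (j+1) (j+2+e)) * ((-1)^(h-j) * of_nat ((2*e+1) choose (h-j)))
          = (-1)^(h+j) * int ((2*e+1) choose (h-j)) * int (ycount (j+1) (j+e+2))"
        unfolding s by simp
    qed
    thus ?thesis using True by (simp add: coeff_ypoly)
  next
    case False
    hence "2*e \<le> h" using e by simp
    thus ?thesis using False vanish[OF e] by (simp add: coeff_ypoly)
  qed
qed

theorem theorem3p4:
  fixes e :: nat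
  assumes "e > 0"
  shows "Yser e * (1 - fps_X) ^ (2*e+1) = fps_of_poly (ypoly e)
         \<and> (Abs_fps (\<lambda>k. rat_of_int (fps_nth (Yser e) k)) :: rat fps)
             = fps_of_poly (map_poly rat_of_int (ypoly e)) / (1 - fps_X) ^ (2*e+1)
         \<and> degree (ypoly e) \<le> 2*e - 1"
proof (intro conjI)
  show P1: "Yser e * (1 - fps_X) ^ (2*e+1) = fps_of_poly (ypoly e)" by (rule part1[OF assms])
  let ?Y = "Abs_fps (\<lambda>k. rat_of_int (fps_nth (Yser e) k)) :: rat fps"
  let ?g = "(1 - fps_X) ^ (2*e+1) :: rat fps"
  have "?Y * ?g = fps_of_poly (map_poly rat_of_int (ypoly e))"
  proof (rule fps_ext)
    fix h
    have "(?Y * ?g) $ h = rat_of_int ((Yser e * (1 - fps_X) ^ (2*e+1)) $ h)"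
      unfolding fps_mult_nth omx by (simp add: of_int_sum)
    also have "\<dots> = fps_of_poly (map_poly rat_of_int (ypoly e)) $ h"
      unfolding P1 by (simp add: coeff_map_poly)
    finally show "(?Y * ?g) $ h = fps_of_poly (map_poly rat_of_int (ypoly e)) $ h" .
  qed
  moreover have "?g \<noteq> 0"
  proof
    assume "?g = 0"
    hence "?g $ 0 = 0" by simp
    thus False by (simp add: omx)
  qed
  ultimately show "?Y = fps_of_poly (map_poly rat_of_int (ypoly e)) / ?g"
    by (metis nonzero_mult_div_cancel_right)
  show "degree (ypoly e) \<le> 2*e - 1"
    unfolding ypoly_def by (rule degree_sum_le) (auto intro: order.trans[OF degree_monom_le])
qed

end
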